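(* Let $T$ be a non-abelian finite simple group whose Schur multiplier has order $1$ or $2$. Let $G$ be a strictly $T$-solvable group such that $\overline{\Gamma}(G)$ has at least one edge with both endpoints in $\pi(T)$, and suppose $G$ has a normal series $1\unlhd N\unlhd M\unlhd G$ with $N$ solvable, $M/N\cong T$, and $G/M$ isomorphic to a subgroup of $\operatorname{Out}(T)$. Then for all $s\in\pi(T)$ and $p\in\pi(G)\setminus\pi(\operatorname{Aut}(T))$, if $s-p\in\overline{\Gamma}(G)$ then $s-p\in\overline{\Gamma}(M)$.
   Context: All groups are finite. $\pi(G)$ is the set of prime divisors of $|G|$; $\overline{\Gamma}(G)$ is the graph on $\pi(G)$ where distinct $p,q$ are adjacent iff $G$ has no element of order $pq$. A group is strictly $T$-solvable if all composition factors are abelian or isomorphic to $T$ and at least one is isomorphic to $T$. *)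

theory Defs
  imports "HOL-Algebra.Algebra" Complex_Main
begin

definition prime_divs :: "('a, 'b) monoid_scheme \<Rightarrow> nat set" where
  "prime_divs G = {p. Factorial_Ring.prime p \<and> p dvd order G}"

definition ngraph_edge :: "('a, 'b) monoid_scheme \<Rightarrow> nat \<Rightarrow> nat \<Rightarrow> bool" where
  "ngraph_edge G p q \<longleftrightarrow> p \<in> prime_divs G \<and> q \<in> prime_divs G \<and> p \<noteq> q \<and>
     \<not> (\<exists>x \<in> carrier G. group.ord G x = p * q)"

definition inner_auto :: "('a, 'b) monoid_scheme \<Rightarrow> 'a \<Rightarrow> ('a \<Rightarrow> 'a)" where
  "inner_auto G g = (\<lambda>x \<in> carrier G. g \<otimes>\<^bsub>G\<^esub> x \<otimes>\<^bsub>G\<^esub> inv\<^bsub>G\<^esub> g)"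

definition Inn :: "('a, 'b) monoid_scheme \<Rightarrow> ('a \<Rightarrow> 'a) set" where
  "Inn G = inner_auto G ` carrier G"

definition OutGroup :: "('a, 'b) monoid_scheme \<Rightarrow> ('a \<Rightarrow> 'a) set monoid" where
  "OutGroup G = AutoGroup G Mod Inn G"

definition cocycle2 :: "('a, 'b) monoid_scheme \<Rightarrow> ('a \<Rightarrow> 'a \<Rightarrow> complex) \<Rightarrow> bool" where
  "cocycle2 G f \<longleftrightarrow>
     (\<forall>x y. (x \<notin> carrier G \<or> y \<notin> carrier G) \<longrightarrow> f x y = 1) \<and>
     (\<forall>x \<in> carrier G. \<forall>y \<in> carrier G. f x y \<noteq> 0) \<and>
     (\<forall>x \<in> carrier G. \<forall>y \<in> carrier G. \<forall>z \<in> carrier G.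
        f x y * f (x \<otimes>\<^bsub>G\<^esub> y) z = f y z * f x (y \<otimes>\<^bsub>G\<^esub> z))"

definition cohomologous :: "('a, 'b) monoid_scheme \<Rightarrow> (('a \<Rightarrow> 'a \<Rightarrow> complex) \<times> ('a \<Rightarrow> 'a \<Rightarrow> complex)) set" where
  "cohomologous G = {(f, g). cocycle2 G f \<and> cocycle2 G g \<and>
     (\<exists>c. (\<forall>x \<in> carrier G. c x \<noteq> 0) \<and>
        (\<forall>x \<in> carrier G. \<forall>y \<in> carrier G. f x y = g x y * (c x * c y / c (x \<otimes>\<^bsub>G\<^esub> y))))}"

definition schur_multiplier_order :: "('a, 'b) monoid_scheme \<Rightarrow> nat" where
  "schur_multiplier_order G = card ({f. cocycle2 G f} // cohomologous G)"

definition composition_series :: "('a, 'b) monoid_scheme \<Rightarrow> 'a set list \<Rightarrow> bool" where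
  "composition_series G Hs \<longleftrightarrow> Hs \<noteq> [] \<and> hd Hs = {\<one>\<^bsub>G\<^esub>} \<and> last Hs = carrier G \<and>
     (\<forall>i < length Hs. subgroup (Hs ! i) G) \<and>
     (\<forall>i. Suc i < length Hs \<longrightarrow>
        Hs ! i \<lhd> G\<lparr>carrier := Hs ! Suc i\<rparr> \<and>
        simple_group (G\<lparr>carrier := Hs ! Suc i\<rparr> Mod (Hs ! i)))"

definition comp_factor :: "('a, 'b) monoid_scheme \<Rightarrow> 'a set list \<Rightarrow> nat \<Rightarrow> 'a set monoid" where
  "comp_factor G Hs i = G\<lparr>carrier := Hs ! Suc i\<rparr> Mod (Hs ! i)"

definition strictly_solvable_over ::
  "('c, 'd) monoid_scheme \<Rightarrow> ('a, 'b) monoid_scheme \<Rightarrow> bool" where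
  "strictly_solvable_over T G \<longleftrightarrow> group G \<and> finite (carrier G) \<and>
     (\<exists>Hs. composition_series G Hs \<and>
        (\<forall>i. Suc i < length Hs \<longrightarrow> comm_group (comp_factor G Hs i) \<or> comp_factor G Hs i \<cong> T) \<and>
        (\<exists>i. Suc i < length Hs \<and> comp_factor G Hs i \<cong> T))"

end

theory Submission imports Defs begin

lemma inner_auto_in_auto:
  assumes "group T" "g \<in> carrier T"
  shows "inner_auto T g \<in> auto T"
proof -
  interpret group T by fact
  have b: "bij_betw (inner_auto T g) (carrier T) (carrier T)"
    using conjugation_is_bij[OF assms(2)] by (simp add: inner_auto_def)
  have h: "inner_auto T g \<in> hom T T"
    unfolding hom_def inner_auto_def using assms(2)
    by (auto simp: m_assoc) (simp add: m_assoc[symmetric])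
  show ?thesis using b h unfolding auto_def Bij_def inner_auto_def by auto
qed

lemma Inn_subgroup:
  assumes "group T"
  shows "subgroup (Inn T) (AutoGroup T)"
proof -
  interpret group T by fact
  have gh: "group_hom T (BijGroup (carrier T)) (inner_auto T)"
    unfolding group_hom_def group_hom_axioms_def
    using conjugation_is_hom group_BijGroup is_group
    by (simp add: inner_auto_def[abs_def])
  have "subgroup (Inn T) (BijGroup (carrier T))"
    using group_hom.img_is_subgroup[OF gh] by (simp add: Inn_def)
  moreover have "Inn T \<subseteq> auto T"
    using inner_auto_in_auto[OF assms] by (auto simp: Inn_def)
  ultimately show ?thesis
    using group.subgroup_incl[OF group_BijGroup _ subgroup_auto] unfolding AutoGroup_def
    by blast
qed

lemma Inn_normal:
  assumes "group T"
  shows "Inn T \<lhd> AutoGroup T"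
proof -
  interpret T: group T by fact
  interpret A: group "AutoGroup T" by (rule T.AutoGroup)
  have mult: "\<And>f h. f \<in> auto T \<Longrightarrow> h \<in> auto T \<Longrightarrow> f \<otimes>\<^bsub>AutoGroup T\<^esub> h = compose (carrier T) f h"
    by (auto simp: AutoGroup_def BijGroup_def auto_def)
  show ?thesis
  proof (subst A.normal_inv_iff, intro conjI ballI)
    show "subgroup (Inn T) (AutoGroup T)" by (rule Inn_subgroup[OF assms])
  next
    fix a h assume a: "a \<in> carrier (AutoGroup T)" and h: "h \<in> Inn T"
    then obtain g where g: "g \<in> carrier T" and hg: "h = inner_auto T g" by (auto simp: Inn_def)
    define b where "b = inv\<^bsub>AutoGroup T\<^esub> a"
    have aa: "a \<in> auto T" using a by (simp add: AutoGroup_def)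
    have bb: "b \<in> auto T" using A.inv_closed[OF a] by (simp add: b_def AutoGroup_def)
    have hh: "h \<in> auto T" using inner_auto_in_auto[OF assms g] hg by simp
    have ab: "compose (carrier T) a b = (\<lambda>x\<in>carrier T. x)"
      using A.r_inv[OF a] mult[OF aa bb] by (simp add: b_def AutoGroup_def BijGroup_def)
    have ahom: "a \<in> hom T T" and bhom: "b \<in> hom T T" using aa bb by (auto simp: auto_def)
    interpret ga: group_hom T T a by (simp add: group_hom_def group_hom_axioms_def ahom T.is_group)
    have bc: "\<And>x. x \<in> carrier T \<Longrightarrow> b x \<in> carrier T" using bhom by (auto simp: hom_def)
    have abx: "\<And>x. x \<in> carrier T \<Longrightarrow> a (b x) = x"
      using ab by (metis compose_eq restrict_apply')
    have ag: "a g \<in> carrier T" using ga.hom_closed g by simp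
    have "a \<otimes>\<^bsub>AutoGroup T\<^esub> h \<otimes>\<^bsub>AutoGroup T\<^esub> b = inner_auto T (a g)"
    proof -
      have ah: "a \<otimes>\<^bsub>AutoGroup T\<^esub> h \<in> auto T"
        using A.m_closed[OF a, of h] hh by (simp add: AutoGroup_def)
      have "a \<otimes>\<^bsub>AutoGroup T\<^esub> h \<otimes>\<^bsub>AutoGroup T\<^esub> b = compose (carrier T) (compose (carrier T) a h) b"
        using mult[OF ah bb] mult[OF aa hh] by simp
      also have "\<dots> = inner_auto T (a g)"
      proof (rule ext)
        fix x show "compose (carrier T) (compose (carrier T) a h) b x = inner_auto T (a g) x"
        proof (cases "x \<in> carrier T")
          case True
          have "compose (carrier T) (compose (carrier T) a h) b x = a (g \<otimes>\<^bsub>T\<^esub> b x \<otimes>\<^bsub>T\<^esub> inv\<^bsub>T\<^esub> g)"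
            using True bc by (simp add: compose_def hg inner_auto_def)
          also have "\<dots> = a g \<otimes>\<^bsub>T\<^esub> x \<otimes>\<^bsub>T\<^esub> inv\<^bsub>T\<^esub> (a g)"
            using True bc g abx by (simp add: ga.hom_mult ga.hom_inv)
          finally show ?thesis using True by (simp add: inner_auto_def)
        qed (simp add: compose_def inner_auto_def)
      qed
      finally show ?thesis .
    qed
    then show "a \<otimes>\<^bsub>AutoGroup T\<^esub> h \<otimes>\<^bsub>AutoGroup T\<^esub> inv\<^bsub>AutoGroup T\<^esub> a \<in> Inn T"
      using ag by (simp add: b_def Inn_def)
  qed
qed

lemma ord_restrict:
  assumes "subgroup M G" "group G" "x \<in> M"
  shows "group.ord (G\<lparr>carrier := M\<rparr>) x = group.ord G x"
proof -
  interpret group G by fact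
  interpret M: group "G\<lparr>carrier := M\<rparr>" using subgroup.subgroup_is_group assms by blast
  show ?thesis unfolding ord_def M.ord_def
    by (simp add: nat_pow_consistent[symmetric])
qed

theorem lemma1p19:
  fixes T :: "('c, 'd) monoid_scheme" and G :: "('a, 'b) monoid_scheme"
  assumes "simple_group T" and "finite (carrier T)" and "\<not> comm_group T"
    and "schur_multiplier_order T = 1 \<or> schur_multiplier_order T = 2"
    and "group G" and "finite (carrier G)"
    and "strictly_solvable_over T G"
    and "\<exists>a \<in> prime_divs T. \<exists>b \<in> prime_divs T. ngraph_edge G a b"
    and "N \<lhd> G" and "M \<lhd> G" and "N \<subseteq> M"
    and "solvable (G\<lparr>carrier := N\<rparr>)"
    and "G\<lparr>carrier := M\<rparr> Mod N \<cong> T"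
    and "\<exists>H. subgroup H (OutGroup T) \<and> G Mod M \<cong> (OutGroup T)\<lparr>carrier := H\<rparr>"
  shows "\<forall>s \<in> prime_divs T. \<forall>p \<in> prime_divs G - prime_divs (AutoGroup T).
           ngraph_edge G s p \<longrightarrow> ngraph_edge (G\<lparr>carrier := M\<rparr>) s p"
proof (intro ballI impI)
  fix s p
  assume s: "s \<in> prime_divs T" and p: "p \<in> prime_divs G - prime_divs (AutoGroup T)"
    and e: "ngraph_edge G s p"
  interpret G: group G by fact
  have grT: "group T" using assms(1) by (simp add: simple_group_def)
  have Msub: "subgroup M G" using assms(10) by (simp add: normal_def)
  interpret Mg: group "G\<lparr>carrier := M\<rparr>" using Msub G.subgroup_imp_group by blast
  have NnM: "N \<lhd> G\<lparr>carrier := M\<rparr>" using G.normal_restrict_supergroup[OF Msub assms(9) assms(11)] .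
  have NsubM: "subgroup N (G\<lparr>carrier := M\<rparr>)" using NnM by (simp add: normal_def)
  have "card (rcosets\<^bsub>G\<lparr>carrier := M\<rparr>\<^esub> N) * card N = card M"
    using Mg.lagrange[OF NsubM] by (simp add: order_def)
  moreover have "card (rcosets\<^bsub>G\<lparr>carrier := M\<rparr>\<^esub> N) = order T"
    using iso_same_card[OF assms(13)] by (simp add: FactGroup_def order_def)
  ultimately have sM: "s dvd card M" using s unfolding prime_divs_def
    by (metis (mono_tags, lifting) dvd_mult2 mem_Collect_eq)
  obtain H where H: "subgroup H (OutGroup T)" and iso: "G Mod M \<cong> (OutGroup T)\<lparr>carrier := H\<rparr>"
    using assms(14) by blast
  have c1: "card (rcosets\<^bsub>G\<^esub> M) * card M = order G" using G.lagrange[OF Msub] .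
  have c2: "card (rcosets\<^bsub>G\<^esub> M) = card H" using iso_same_card[OF iso] by (simp add: FactGroup_def)
  interpret A: group "AutoGroup T" using group.AutoGroup[OF grT] .
  have nI: "Inn T \<lhd> AutoGroup T" using Inn_normal[OF grT] .
  interpret O: group "OutGroup T" unfolding OutGroup_def using normal.factorgroup_is_group[OF nI] .
  have "card H dvd order (OutGroup T)" using O.lagrange[OF H] by (metis dvd_triv_right)
  moreover have "order (OutGroup T) dvd order (AutoGroup T)"
    using A.lagrange[OF Inn_subgroup[OF grT]] unfolding OutGroup_def
    by (metis FactGroup_def dvd_triv_left order_def partial_object.select_convs(1))
  ultimately have "card H dvd order (AutoGroup T)" by (rule dvd_trans)
  then have "\<not> p dvd card H" using p unfolding prime_divs_def by auto
  moreover have "p dvd card H * card M" using p c1 c2 unfolding prime_divs_def by auto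
  moreover have "Factorial_Ring.prime p" using p unfolding prime_divs_def by auto
  ultimately have pM: "p dvd card M" using prime_dvd_mult_iff by blast
  have sp: "Factorial_Ring.prime s" "Factorial_Ring.prime p" using s p unfolding prime_divs_def by auto
  show "ngraph_edge (G\<lparr>carrier := M\<rparr>) s p"
    unfolding ngraph_edge_def prime_divs_def
  proof (intro conjI)
    show "s \<noteq> p" using e by (simp add: ngraph_edge_def)
    show "\<not> (\<exists>x\<in>carrier (G\<lparr>carrier := M\<rparr>). group.ord (G\<lparr>carrier := M\<rparr>) x = s * p)"
      using e Msub ord_restrict[OF Msub assms(5)] subgroup.subset[OF Msub]
      unfolding ngraph_edge_def by auto
  qed (use sp sM pM in \<open>auto simp: order_def\<close>)
qed

end
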